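(* Let $p_1,p_2$ be distinct odd primes. (1) If $n=p_1p_2$, then $\Omega_2(n)\neq\emptyset$. (2) If $n=p_1p_2^2n'$ or $n=2p_1p_2n'$ for some integer $n'\geq 1$, then $\Omega_2(n)=\emptyset$.
   Context: For an integer $n\ge 2$, let $\phi_2(n)=\{k\mid 0\le k\le n-1,\ \gcd(k,n)=2^w\text{ for some }w\ge0\}$, where an integer $k$ is regarded as an element of $\phi_2(n)$ when its residue modulo $n$ (taken in $\{0,\dots,n-1\}$) is, and $\gcd(0,n)=n$. Define $\Omega_2(n)$ to be the set of $i_0\in\mathbb{Z}_n$ such that for every odd integer $i$ with $1\le i\le n$ and $i\notin\phi_2(n)$ (i.e. $\gcd(i,n)$ is not a power of $2$), the element $i_0-i$ is invertible in $\mathbb{Z}_n$. *)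

theory Defs
  imports "HOL-Computational_Algebra.Primes"
begin

text \<open>Residues of Z_n are represented by their canonical representatives 0..n-1 (as nat).\<close>

definition phi2 :: "nat \<Rightarrow> nat set" where
  "phi2 n = {k. k \<le> n - 1 \<and> (\<exists>w::nat. gcd k n = 2 ^ w)}"

text \<open>An integer i is regarded as an element of phi2 n when i mod n is.
  Invertibility of i0 - i in Z_n means coprimality with n.\<close>

definition Omega2 :: "nat \<Rightarrow> nat set" where
  "Omega2 n = {i0. i0 < n \<and>
     (\<forall>i::nat. odd i \<and> 1 \<le> i \<and> i \<le> n \<and> i mod n \<notin> phi2 n
        \<longrightarrow> coprime (int i0 - int i) (int n))}"

end

theory Submission imports Defs "HOL-Number_Theory.Number_Theory" begin

lemma bad_i:
  fixes p q n :: nat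
  assumes "prime q" "odd q" "q dvd n" "n > 0" "i mod n \<in> phi2 n"
  shows "\<not> q dvd i"
proof
  assume "q dvd i"
  then have "q dvd i mod n" using assms(3) by (simp add: dvd_mod)
  then have "q dvd gcd (i mod n) n" using assms(3) by simp
  moreover obtain w where "gcd (i mod n) n = 2^w" using assms(5) by (auto simp: phi2_def)
  ultimately have "q dvd 2^w" by simp
  then have "q dvd 2" using assms(1) prime_dvd_power by blast
  then have "q \<le> 2" by (simp add: dvd_imp_le)
  moreover have "q \<ge> 2" using assms(1) prime_ge_2_nat by blast
  ultimately show False using assms(2) by simp
qed

lemma part2:
  fixes p1 p2 n :: nat
  assumes "prime p1" "prime p2" "odd p1" "odd p2" "p1 \<noteq> p2"
    "p1 * p2 dvd n" "p2 * (2 * p1 - 1) \<le> n"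
  shows "Omega2 n = {}"
proof (rule ccontr)
  assume "Omega2 n \<noteq> {}"
  then obtain i0 where i0: "i0 < n" and H: "\<forall>i::nat. odd i \<and> 1 \<le> i \<and> i \<le> n \<and> i mod n \<notin> phi2 n
        \<longrightarrow> coprime (int i0 - int i) (int n)" unfolding Omega2_def by auto
  have p1g: "p1 \<ge> 3" using assms(1,3) prime_ge_2_nat[of p1] by presburger
  have p2g: "p2 \<ge> 3" using assms(2,4) prime_ge_2_nat[of p2] by presburger
  have n0: "n > 0" using i0 by simp
  have cop: "coprime p2 p1" using assms(1,2,5) by (simp add: primes_coprime)
  then obtain x where x: "[p2 * x = 1] (mod p1)" using cong_solve_coprime_nat[OF cop] by auto
  define k0 where "k0 = (x * i0) mod p1"
  define k where "k = (if odd k0 then k0 else k0 + p1)"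
  have k0l: "k0 < p1" using p1g unfolding k0_def by simp
  have kodd: "odd k" unfolding k_def using assms(3) by auto
  have k1: "1 \<le> k" using kodd by (cases k) auto
  have kl: "k \<le> 2 * p1 - 1" using k0l kodd unfolding k_def by (auto split: if_splits)
  have kc: "[k = x * i0] (mod p1)" unfolding k_def k0_def cong_def by auto
  define i where "i = p2 * k"
  have "[i = p2 * x * i0] (mod p1)" unfolding i_def using kc
    by (metis cong_scalar_left mult.assoc)
  moreover have "[p2 * x * i0 = 1 * i0] (mod p1)" using x cong_scalar_right by blast
  ultimately have ci: "[i = i0] (mod p1)" using cong_trans by simp
  have "odd i" unfolding i_def using kodd assms(4) by simp
  moreover have "1 \<le> i" unfolding i_def using k1 p2g by simp
  moreover have "i \<le> n" unfolding i_def using kl assms(7) mult_le_mono2 order_trans by blast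
  moreover have "i mod n \<notin> phi2 n"
  proof
    assume a: "i mod n \<in> phi2 n"
    have "p2 dvd n" using assms(6) by (meson dvd_mult_right)
    from bad_i[OF assms(2,4) this n0 a] show False unfolding i_def by simp
  qed
  ultimately have "coprime (int i0 - int i) (int n)" using H by blast
  moreover have "int p1 dvd (int i0 - int i)"
    using ci by (metis cong_int_iff cong_iff_dvd_diff cong_sym)
  moreover have "int p1 dvd int n" using assms(6) by (metis dvd_mult_left of_nat_dvd_iff)
  ultimately have "is_unit (int p1)" using coprime_common_divisor by blast
  then show False using p1g by simp
qed
lemma side:
  fixes p q i i0 :: nat
  assumes "prime p" "prime q" "odd p" "odd q" "p \<noteq> q" "odd i" "1 \<le> i" "i \<le> p*q"
    "i mod (p*q) \<notin> phi2 (p*q)" "[i0 = 2*p+2*q] (mod (p*q))"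
  shows "\<not> int p dvd (int i0 - int i)"
proof
  assume d: "int p dvd (int i0 - int i)"
  have pg: "p \<ge> 3" using assms(1,3) prime_ge_2_nat[of p] by presburger
  have qg: "q \<ge> 3" using assms(2,4) prime_ge_2_nat[of q] by presburger
  have "\<not> coprime i (p*q)"
  proof
    assume "coprime i (p*q)"
    then have "gcd (i mod (p*q)) (p*q) = 2^0" by (simp add: gcd.commute gcd_red_nat[symmetric])
    moreover have "i mod (p*q) \<le> p*q - 1" proof -
      have "p*q > 0" using pg qg by simp
      then have "i mod (p*q) < p*q" by simp
      then show ?thesis by linarith
    qed
    ultimately show False using assms(9) unfolding phi2_def by blast
  qed
  then have pq: "p dvd i \<or> q dvd i"
    using prime_imp_coprime[OF assms(1)] prime_imp_coprime[OF assms(2)]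
    by (auto simp: coprime_commute)
  have "[i0 = 2*p+2*q] (mod p)" using assms(10) cong_modulus_mult_nat by blast
  then have "int p dvd (int i0 - (2*int p + 2*int q))"
  proof -
    have "[int i0 = int (2*p+2*q)] (mod int p)" using \<open>[i0 = 2*p+2*q] (mod p)\<close> cong_int_iff by blast
    then have "int p dvd int i0 - int (2*p+2*q)" by (simp only: cong_iff_dvd_diff)
    then show ?thesis by simp
  qed
  with d have "int p dvd ((int i0 - int i) - (int i0 - (2*int p + 2*int q)))"
    using dvd_diff by blast
  then have "int p dvd (int p * 2 + (2*int q - int i))" by (simp add: algebra_simps)
  then have d2: "int p dvd (2*int q - int i)"
    using dvd_add_right_iff dvd_triv_left by blast
  have cpq: "coprime (int p) (int q)" using assms(1,2,5) by (simp add: primes_coprime)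
  have pi: "prime (int p)" using assms(1) by simp
  show False
  proof (cases "p dvd i")
    case True
    then have "int p dvd int i" by simp
    then have "int p dvd (2*int q - int i) + int i" using d2 dvd_add by blast
    then have "int p dvd 2 * int q" by simp
    then have "int p dvd 2 \<or> int p dvd int q" using pi prime_dvd_mult_iff by blast
    moreover have "\<not> int p dvd 2"
    proof
      assume "int p dvd 2"
      then have "p dvd 2" by (metis of_nat_dvd_iff of_nat_numeral)
      then show False using pg dvd_imp_le[of p 2] by simp
    qed
    moreover have "\<not> int p dvd int q"
    proof
      assume "int p dvd int q"
      then have "p dvd q" by simp
      then show False using assms(1,2,5) by (simp add: primes_dvd_imp_eq)
    qed
    ultimately show False by blast
  next
    case False
    with pq obtain k where k: "i = q * k" by auto
    have "odd k" using k assms(6) by simp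
    have "k \<le> p" using k assms(8) qg by (simp add: mult.commute)
    have "int p dvd int q * (2 - int k)" using d2 k by (simp add: algebra_simps)
    then have "int p dvd (2 - int k)" using cpq by (simp add: coprime_dvd_mult_right_iff)
    moreover have "2 - int k \<noteq> 0" using \<open>odd k\<close> by presburger
    ultimately have "\<bar>int p\<bar> \<le> \<bar>2 - int k\<bar>" using dvd_imp_le_int by blast
    then show False using \<open>k \<le> p\<close> \<open>odd k\<close> pg assms(7) k by (cases "k = 0") auto
  qed
qed
theorem lemma7p3:
  fixes p1 p2 :: nat
  assumes "prime p1" and "prime p2" and "odd p1" and "odd p2" and "p1 \<noteq> p2"
  shows "Omega2 (p1 * p2) \<noteq> {} \<and>
         (\<forall>n n'::nat. n' \<ge> 1 \<and> (n = p1 * p2^2 * n' \<or> n = 2 * p1 * p2 * n')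
             \<longrightarrow> Omega2 n = {})"
proof
  have p1g: "p1 \<ge> 3" using assms(1,3) prime_ge_2_nat[of p1] by presburger
  have p2g: "p2 \<ge> 3" using assms(2,4) prime_ge_2_nat[of p2] by presburger
  define i0 where "i0 = (2*p1+2*p2) mod (p1*p2)"
  have "i0 \<in> Omega2 (p1*p2)"
    unfolding Omega2_def
  proof (intro CollectI conjI allI impI)
    show "i0 < p1*p2" unfolding i0_def using p1g p2g by simp
    fix i assume H: "odd i \<and> 1 \<le> i \<and> i \<le> p1 * p2 \<and> i mod (p1 * p2) \<notin> phi2 (p1 * p2)"
    have c1: "[i0 = 2*p1+2*p2] (mod (p1*p2))" unfolding i0_def cong_def by simp
    have c2: "[i0 = 2*p2+2*p1] (mod (p2*p1))" using c1 by (simp add: mult.commute add.commute)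
    have n1: "\<not> int p1 dvd (int i0 - int i)"
      using side[OF assms(1,2,3,4,5)] H c1 by blast
    have H2: "i \<le> p2*p1" "i mod (p2 * p1) \<notin> phi2 (p2 * p1)" using H by (simp_all add: mult.commute)
    have n2: "\<not> int p2 dvd (int i0 - int i)"
      using side[OF assms(2,1,4,3) assms(5)[symmetric]] H H2 c2 by blast
    have "coprime (int p1) (int i0 - int i)"
      using prime_imp_coprime[of "int p1"] assms(1) n1 by simp
    moreover have "coprime (int p2) (int i0 - int i)"
      using prime_imp_coprime[of "int p2"] assms(2) n2 by simp
    ultimately show "coprime (int i0 - int i) (int (p1 * p2))"
      by (simp add: coprime_commute)
  qed
  then show "Omega2 (p1 * p2) \<noteq> {}" by blast
next
  have p1g: "p1 \<ge> 3" using assms(1,3) prime_ge_2_nat[of p1] by presburger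
  have p2g: "p2 \<ge> 3" using assms(2,4) prime_ge_2_nat[of p2] by presburger
  show "\<forall>n n'::nat. n' \<ge> 1 \<and> (n = p1 * p2^2 * n' \<or> n = 2 * p1 * p2 * n')
             \<longrightarrow> Omega2 n = {}"
  proof (intro allI impI)
    fix n n' :: nat
    assume A: "n' \<ge> 1 \<and> (n = p1 * p2^2 * n' \<or> n = 2 * p1 * p2 * n')"
    have "p1 * p2 dvd n \<and> p2 * (2 * p1 - 1) \<le> n"
    proof (cases "n = p1 * p2^2 * n'")
      case True
      have "p1 * 3 \<le> p1 * p2" using p2g by (rule mult_le_mono2)
      then have "2*p1 - 1 \<le> p1 * p2" by linarith
      then have "p2 * (2*p1-1) \<le> p2 * (p1*p2)" by simp
      also have "\<dots> \<le> p2 * (p1*p2) * n'" using A by simp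
      finally have "p2 * (2*p1-1) \<le> n" using True by (simp add: power2_eq_square mult.commute mult.left_commute)
      moreover have "p1 * p2 dvd n" using True by (simp add: power2_eq_square)
      ultimately show ?thesis by blast
    next
      case False
      then have n: "n = 2 * p1 * p2 * n'" using A by blast
      have "p2 * (2*p1-1) \<le> p2 * (2*p1)" by (rule mult_le_mono2) simp
      also have "\<dots> = 2*p1*p2" by simp
      also have "\<dots> \<le> 2*p1*p2*n'" using A by simp
      finally have "p2 * (2*p1-1) \<le> n" using n by simp
      moreover have "p1 * p2 dvd n" using n by (simp add: mult.assoc)
      ultimately show ?thesis by blast
    qed
    then show "Omega2 n = {}" using part2[OF assms] by blast
  qed
qed

end
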